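(* Let $\hat k\ge 2$ be an integer and $n=\hat k^2$. Define $\tilde P:\mathbb{R}^n\to\mathbb{R}$ by $$\tilde P(c)=\sum_{i=1}^{n}\frac{e^{c_i}}{\sum_{v=1}^{n}e^{c_v}}\,c_i .$$ Then for all $c,c'\in\mathbb{R}^n$, $$|\tilde P(c)-\tilde P(c')|\le(\hat k^2-1)\max_{1\le i\le n}|c_i-c_i'| .$$
   Context: $\tilde P$ is the SoftPool operation applied to one $\hat k\times\hat k$ kernel region of a feature map, whose $\hat k^2$ entries are listed as the vector $c$: each entry is weighted by the softmax of the entries in the region and the weighted entries are summed. *)

theory Defs
  imports Complex_Main
begin

text \<open>SoftPool over a region of n entries c 0, ..., c (n-1) (0-based indexing of c_1..c_n).\<close>
definition softpool :: "nat \<Rightarrow> (nat \<Rightarrow> real) \<Rightarrow> real" where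
  "softpool n c = (\<Sum>i<n. exp (c i) / (\<Sum>v<n. exp (c v)) * c i)"

end

theory Submission
  imports Defs
begin

lemma aux_exp:
  fixes u :: real assumes "u \<ge> 0"
  shows "exp (-u) * max 0 (u - 1) \<le> 1/4"
proof -
  have e: "(1 + u/3)^3 \<le> exp (u/3) ^ 3"
    by (rule power_mono) (use assms in \<open>auto simp: add.commute\<close>)
  have "exp (u/3) ^ 3 = exp u" by (simp add: exp_of_nat_mult[symmetric])
  have p: "4 * (u - 1) \<le> (1 + u/3)^3"
  proof -
    have id: "(1 + u/3)^3 - 4 * (u - 1) = (u-3)^2 * (u+15) / 27"
      by (simp add: field_simps power2_eq_square power3_eq_cube)
    have "0 \<le> (u-3)^2 * (u+15) / 27" using assms by simp
    thus ?thesis using id by linarith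
  qed
  have "4 * max 0 (u - 1) \<le> exp u"
    using e p \<open>exp (u/3) ^ 3 = exp u\<close> by (auto simp: max_def)
  hence "exp (-u) * (4 * max 0 (u - 1)) \<le> exp (-u) * exp u"
    by (intro mult_left_mono) auto
  thus ?thesis by (simp add: exp_minus field_simps)
qed

lemma key:
  fixes x :: "nat \<Rightarrow> real" assumes n: "n > 0"
  shows "(\<Sum>j<n. exp (x j) / (\<Sum>v<n. exp (x v)) * \<bar>1 + x j - softpool n x\<bar>) \<le> 1 + real n / 2"
proof -
  define S where "S = (\<Sum>v<n. exp (x v))"
  define P where "P = softpool n x"
  define q where "q j = exp (x j) / S" for j
  define M where "M = Max (x ` {..<n})"
  have Spos: "S > 0" unfolding S_def using n by (intro sum_pos) auto
  have xM: "x j \<le> M" if "j < n" for j unfolding M_def using that by (intro Max_ge) auto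
  have "M \<in> x ` {..<n}" unfolding M_def using n by (intro Max_in) auto
  then obtain m where m: "m < n" "x m = M" by auto
  have SM: "exp M \<le> S" unfolding S_def using m
    by (metis finite_lessThan lessThan_iff member_le_sum exp_ge_zero)
  have q0: "q j \<ge> 0" for j unfolding q_def using Spos by simp
  have qsum: "(\<Sum>j<n. q j) = 1" unfolding q_def using Spos
    by (simp add: sum_divide_distrib[symmetric] S_def)
  have Pq: "P = (\<Sum>j<n. q j * x j)" unfolding P_def softpool_def q_def S_def by simp
  have PM: "P \<le> M"
  proof -
    have "P \<le> (\<Sum>j<n. q j * M)" unfolding Pq
      by (intro sum_mono mult_left_mono xM q0) auto
    also have "\<dots> = M" using qsum by (simp add: sum_distrib_right[symmetric])
    finally show ?thesis .
  qed
  have split: "\<bar>1 + x j - P\<bar> = (1 + x j - P) + 2 * max 0 (P - x j - 1)" for j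
    by (simp add: abs_if max_def)
  have lin: "(\<Sum>j<n. q j * (1 + x j - P)) = 1"
    by (simp add: algebra_simps sum.distrib sum_subtractf qsum Pq[symmetric] sum_distrib_right[symmetric])
      (metis qsum sum_distrib_left mult.right_neutral)
  have bnd: "q j * max 0 (P - x j - 1) \<le> 1/4" if "j < n" for j
  proof -
    have "q j * max 0 (P - x j - 1) \<le> q j * max 0 (M - x j - 1)"
      using PM by (intro mult_left_mono q0) auto
    also have "q j \<le> exp (- (M - x j))"
    proof -
      have "q j \<le> exp (x j) / exp M" unfolding q_def using SM Spos
        by (intro divide_left_mono) auto
      thus ?thesis by (simp add: exp_diff)
    qed
    hence "q j * max 0 (M - x j - 1) \<le> exp (- (M - x j)) * max 0 (M - x j - 1)"
      by (intro mult_right_mono) auto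
    also have "\<dots> \<le> 1/4" using aux_exp[of "M - x j"] xM[OF that] by simp
    finally show ?thesis .
  qed
  have "(\<Sum>j<n. q j * \<bar>1 + x j - P\<bar>) = (\<Sum>j<n. q j * (1 + x j - P)) + 2 * (\<Sum>j<n. q j * max 0 (P - x j - 1))"
    by (simp add: split sum_distrib_left sum.distrib[symmetric] algebra_simps)
  also have "\<dots> \<le> 1 + 2 * (\<Sum>j<n. 1/4)"
    unfolding lin by (intro add_left_mono mult_left_mono sum_mono bnd) auto
  also have "\<dots> = 1 + real n / 2" by simp
  finally show ?thesis unfolding q_def S_def P_def .
qed

lemma softpool_alt: "softpool n x = (\<Sum>i<n. exp (x i) * x i) / (\<Sum>v<n. exp (x v))"
  by (simp add: softpool_def sum_divide_distrib)

theorem mainTheorem4: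
  fixes k :: nat and c c' :: "nat \<Rightarrow> real"
  assumes "k \<ge> 2"
  shows "\<bar>softpool (k^2) c - softpool (k^2) c'\<bar>
           \<le> (real (k^2) - 1) * (MAX i\<in>{..<k^2}. \<bar>c i - c' i\<bar>)"
proof -
  define n where "n = k^2"
  have n4: "n \<ge> 4" unfolding n_def using assms
    by (metis power2_nat_le_eq_le power2_eq_square numeral_Bit0 mult_2 eval_nat_numeral(3) le_trans order_refl)
  define D where "D = (MAX i\<in>{..<n}. \<bar>c i - c' i\<bar>)"
  define d where "d i = c i - c' i" for i
  define X where "X t i = c' i + t * d i" for t :: real and i
  define S where "S t = (\<Sum>v<n. exp (X t v))" for t
  define N where "N t = (\<Sum>v<n. exp (X t v) * X t v)" for t
  define S' where "S' t = (\<Sum>v<n. exp (X t v) * d v)" for t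
  define N' where "N' t = (\<Sum>v<n. exp (X t v) * d v * X t v + exp (X t v) * d v)" for t
  define f where "f t = N t / S t" for t
  have Spos: "S t > 0" for t unfolding S_def using n4 by (intro sum_pos) (auto simp: lessThan_empty_iff)
  have dD: "\<bar>d i\<bar> \<le> D" if "i < n" for i unfolding D_def d_def using that n4
    by (intro Max_ge) auto
  have fsp: "f t = softpool n (X t)" for t unfolding f_def N_def S_def softpool_alt ..
  have X0: "X 0 = c'" and X1: "X 1 = c" unfolding X_def d_def by auto
  have deriv: "(f has_real_derivative ((N' t * S t - N t * S' t) / (S t * S t))) (at t)" for t
  proof -
    have dS: "(S has_real_derivative S' t) (at t)" unfolding S_def S'_def X_def
      by (rule DERIV_sum) (auto intro!: derivative_eq_intros)
    have dN: "(N has_real_derivative N' t) (at t)" unfolding N_def N'_def X_def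
      by (rule DERIV_sum) (auto intro!: derivative_eq_intros simp: algebra_simps)
    show ?thesis unfolding f_def using DERIV_divide[OF dN dS] Spos[of t] by simp
  qed
  have fd_eq: "(N' t * S t - N t * S' t) / (S t * S t) =
      (\<Sum>j<n. exp (X t j) / S t * (d j * (1 + X t j - softpool n (X t))))" for t
  proof -
    have P: "softpool n (X t) = N t / S t" using fsp f_def by simp
    have "(N' t * S t - N t * S' t) / (S t * S t) = N' t / S t - (N t / S t) * (S' t / S t)"
      using Spos[of t] by (simp add: field_simps)
    also have "\<dots> = (\<Sum>j<n. exp (X t j) / S t * (d j * (1 + X t j - N t / S t)))"
      unfolding N'_def S'_def
      by (simp add: sum_divide_distrib sum_distrib_left sum_subtractf[symmetric] algebra_simps) (simp add: add_divide_distrib)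
    finally show ?thesis using P by simp
  qed
  have bound: "\<bar>(N' t * S t - N t * S' t) / (S t * S t)\<bar> \<le> (real n - 1) * D" for t
  proof -
    have "\<bar>(N' t * S t - N t * S' t) / (S t * S t)\<bar> \<le>
        (\<Sum>j<n. \<bar>exp (X t j) / S t * (d j * (1 + X t j - softpool n (X t)))\<bar>)"
      unfolding fd_eq by (rule sum_abs)
    also have "\<dots> \<le> (\<Sum>j<n. D * (exp (X t j) / S t * \<bar>1 + X t j - softpool n (X t)\<bar>))"
    proof (intro sum_mono)
      fix j assume "j \<in> {..<n}"
      hence "\<bar>d j\<bar> \<le> D" using dD by auto
      moreover have "exp (X t j) / S t \<ge> 0" using Spos[of t] by simp
      ultimately show "\<bar>exp (X t j) / S t * (d j * (1 + X t j - softpool n (X t)))\<bar>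
          \<le> D * (exp (X t j) / S t * \<bar>1 + X t j - softpool n (X t)\<bar>)"
      proof -
        have "\<bar>exp (X t j) / S t * (d j * (1 + X t j - softpool n (X t)))\<bar>
           = \<bar>d j\<bar> * (exp (X t j) / S t * \<bar>1 + X t j - softpool n (X t)\<bar>)"
          using Spos[of t] by (simp add: abs_mult)
        also have "\<dots> \<le> D * (exp (X t j) / S t * \<bar>1 + X t j - softpool n (X t)\<bar>)"
          using \<open>\<bar>d j\<bar> \<le> D\<close> \<open>exp (X t j) / S t \<ge> 0\<close> using Spos[of t] by (intro mult_right_mono) auto
        finally show ?thesis .
      qed
    qed
    also have "\<dots> = D * (\<Sum>j<n. exp (X t j) / S t * \<bar>1 + X t j - softpool n (X t)\<bar>)"
      by (simp add: sum_distrib_left)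
    also have "\<dots> \<le> D * (1 + real n / 2)"
      using key[of n "X t"] n4 dD[of 0] unfolding S_def
      by (intro mult_left_mono) auto
    also have "\<dots> \<le> D * (real n - 1)"
      using n4 dD[of 0] by (intro mult_left_mono) auto
    finally show ?thesis by (simp add: mult.commute)
  qed
  obtain z where "0 < z" "z < 1" and fz: "f 1 - f 0 = (1 - 0) * ((N' z * S z - N z * S' z) / (S z * S z))"
    using MVT2[of 0 1 f "\<lambda>t. (N' t * S t - N t * S' t) / (S t * S t)"] deriv by auto
  have "\<bar>f 1 - f 0\<bar> \<le> (real n - 1) * D" using fz bound[of z] by simp
  thus ?thesis using fsp X0 X1 unfolding n_def D_def by simp
qed

end
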